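(* Assume $L$ is irreducible and $p\gg0$. Let $\theta\gg0$ with $L\theta=0$ and $\sum_i\theta_i=1$. Then there exist constants $0<m\le M$ such that $m\theta\le w^*(\mu,p)\le M\theta$ for all $\mu>0$; moreover $$\lim_{\mu\to0^+}w^*(\mu,p)=p\qquad\text{and}\qquad\lim_{\mu\to\infty}w^*(\mu,p)=\frac{\sum_{i=1}^n\theta_ip_i}{\sum_{i=1}^n\theta_i^2}\,\theta .$$
   Context: Let $n\ge2$ and $A=(a_{ij})_{n\times n}$ with $a_{ij}\ge0$ for $i\ne j$. The connection matrix $L$ has $L_{ij}=a_{ij}$ for $i\ne j$, $L_{ii}=-\sum_{k\ne i}a_{ki}$. For $\mu>0$ and $r\gg0$, $w^*(\mu,r)\gg0$ denotes the unique positive equilibrium of the single-species patch model $w_i'=\mu\sum_{j=1}^nL_{ij}w_j+w_i(r_i-w_i)$, $i=1,\dots,n$ (it exists and is globally asymptotically stable in $\mathbb R^n_+\setminus\{0\}$ when $L$ is irreducible). Inequalities between vectors are componentwise. *)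

theory Defs
  imports "HOL-Analysis.Analysis"
begin

definition connection_matrix :: "real^'n^'n \<Rightarrow> real^'n^'n" where
  "connection_matrix A = (\<chi> i j. if i = j then - (\<Sum>k\<in>UNIV - {i}. A $ k $ i) else A $ i $ j)"

text \<open>Irreducible matrix: there is no nonempty proper index set S with
  M i j = 0 for all i in S and j not in S (i.e. M is not permutation-similar
  to a block triangular matrix).\<close>
definition irreducible_mat :: "real^'n^'n \<Rightarrow> bool" where
  "irreducible_mat M \<longleftrightarrow>
     \<not> (\<exists>S::'n set. S \<noteq> {} \<and> S \<noteq> UNIV \<and> (\<forall>i\<in>S. \<forall>j\<in>UNIV - S. M $ i $ j = 0))"

definition strictly_pos :: "real^'n \<Rightarrow> bool" where
  "strictly_pos x \<longleftrightarrow> (\<forall>i. x $ i > 0)"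

text \<open>Equilibrium of w_i' = mu * sum_j L_ij w_j + w_i (r_i - w_i).\<close>
definition is_equilibrium :: "real^'n^'n \<Rightarrow> real \<Rightarrow> real^'n \<Rightarrow> real^'n \<Rightarrow> bool" where
  "is_equilibrium L \<mu> r w \<longleftrightarrow>
     (\<forall>i. \<mu> * (\<Sum>j\<in>UNIV. L $ i $ j * w $ j) + w $ i * (r $ i - w $ i) = 0)"

definition wstar :: "real^'n^'n \<Rightarrow> real \<Rightarrow> real^'n \<Rightarrow> real^'n" where
  "wstar L \<mu> r = (THE w. strictly_pos w \<and> is_equilibrium L \<mu> r w)"

end

theory Submission
  imports Defs
begin


lemma row_nonpos:
  fixes L :: "real^'n^'n"
  assumes offd: "\<forall>i j. i \<noteq> j \<longrightarrow> 0 \<le> L$i$j"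
    and z: "\<And>j. z j \<le> 0" and zi: "z i = 0"
  shows "(\<Sum>j\<in>UNIV. L$i$j * z j) \<le> 0"
proof (rule sum_nonpos)
  fix j show "L$i$j * z j \<le> 0"
    using offd z[of j] zi by (cases "i = j") (auto simp: mult_nonneg_nonpos)
qed

lemma row_nonneg:
  fixes L :: "real^'n^'n"
  assumes offd: "\<forall>i j. i \<noteq> j \<longrightarrow> 0 \<le> L$i$j"
    and z: "\<And>j. z j \<ge> 0" and zi: "z i = 0"
  shows "(\<Sum>j\<in>UNIV. L$i$j * z j) \<ge> 0"
proof (rule sum_nonneg)
  fix j show "L$i$j * z j \<ge> 0"
    using offd z[of j] zi by (cases "i = j") auto
qed

lemma row_ge_diag:
  fixes L :: "real^'n^'n"
  assumes offd: "\<forall>i j. i \<noteq> j \<longrightarrow> 0 \<le> L$i$j"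
    and y: "\<And>j. y j \<ge> 0"
  shows "(\<Sum>j\<in>UNIV. L$i$j * y j) \<ge> L$i$i * y i"
proof -
  have "(\<Sum>j\<in>UNIV. L$i$j * y j) = L$i$i * y i + (\<Sum>j\<in>UNIV-{i}. L$i$j * y j)"
    by (simp add: sum.remove)
  moreover have "(\<Sum>j\<in>UNIV-{i}. L$i$j * y j) \<ge> 0"
    using offd y by (intro sum_nonneg) auto
  ultimately show ?thesis by simp
qed

lemma sum_lin_split:
  fixes L :: "real^'n^'n"
  shows "(\<Sum>j\<in>UNIV. L$i$j * (a j - k * b j)) = (\<Sum>j\<in>UNIV. L$i$j * a j) - k * (\<Sum>j\<in>UNIV. L$i$j * b j)"
  by (simp add: right_diff_distrib sum_subtractf sum_distrib_left mult_ac)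

lemma equil_upper:
  fixes L :: "real^'n^'n"
  assumes offd: "\<forall>i j. i \<noteq> j \<longrightarrow> 0 \<le> L$i$j"
    and ker: "\<forall>i. (\<Sum>j\<in>UNIV. L$i$j * \<theta>$j) = 0"
    and th: "\<forall>i. \<theta>$i > 0" and mu: "\<mu> \<ge> 0"
    and eq: "is_equilibrium L \<mu> p w" and wp: "\<forall>i. w$i > 0"
  shows "w$j \<le> Max (range (\<lambda>i. p$i/\<theta>$i)) * \<theta>$j"
proof -
  let ?r = "\<lambda>i. w$i/\<theta>$i"
  define k where "k = Max (range ?r)"
  have "k \<in> range ?r" unfolding k_def by (intro Max_in) auto
  then obtain i where ki: "k = w$i/\<theta>$i" by auto
  have rle: "?r j \<le> k" for j unfolding k_def by (intro Max_ge) auto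
  have wle: "w$j \<le> k*\<theta>$j" for j using rle[of j] th by (simp add: pos_divide_le_eq)
  have wi: "w$i = k*\<theta>$i" using ki th[rule_format, of i] by (simp add: field_simps)
  have "(\<Sum>j\<in>UNIV. L$i$j * (w$j - k*\<theta>$j)) \<le> 0"
    by (rule row_nonpos[OF offd]) (use wle wi in auto)
  hence Lw: "(\<Sum>j\<in>UNIV. L$i$j * w$j) \<le> 0" using ker sum_lin_split[of L i "\<lambda>j. w$j" k "\<lambda>j. \<theta>$j"] by simp
  from eq have "\<mu> * (\<Sum>j\<in>UNIV. L$i$j * w$j) + w$i*(p$i - w$i) = 0" unfolding is_equilibrium_def by blast
  moreover have "\<mu> * (\<Sum>j\<in>UNIV. L$i$j * w$j) \<le> 0" using Lw mu by (simp add: mult_nonneg_nonpos)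
  ultimately have "w$i*(p$i - w$i) \<ge> 0" by linarith
  hence "w$i \<le> p$i" using wp[rule_format, of i] by (simp add: zero_le_mult_iff)
  hence "k \<le> p$i/\<theta>$i" using ki th[rule_format, of i] by (simp add: divide_right_mono)
  also have "\<dots> \<le> Max (range (\<lambda>i. p$i/\<theta>$i))" by (intro Max_ge) auto
  finally show ?thesis using wle[of j] th mult_right_mono[of k _ "\<theta>$j"] by (smt (verit))
qed

lemma equil_lower:
  fixes L :: "real^'n^'n"
  assumes offd: "\<forall>i j. i \<noteq> j \<longrightarrow> 0 \<le> L$i$j"
    and ker: "\<forall>i. (\<Sum>j\<in>UNIV. L$i$j * \<theta>$j) = 0"
    and th: "\<forall>i. \<theta>$i > 0" and mu: "\<mu> \<ge> 0"
    and eq: "is_equilibrium L \<mu> p w" and wp: "\<forall>i. w$i > 0"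
  shows "Min (range (\<lambda>i. p$i/\<theta>$i)) * \<theta>$j \<le> w$j"
proof -
  let ?r = "\<lambda>i. w$i/\<theta>$i"
  define k where "k = Min (range ?r)"
  have "k \<in> range ?r" unfolding k_def by (intro Min_in) auto
  then obtain i where ki: "k = w$i/\<theta>$i" by auto
  have rle: "?r j \<ge> k" for j unfolding k_def by (intro Min_le) auto
  have wle: "w$j \<ge> k*\<theta>$j" for j using rle[of j] th by (simp add: pos_le_divide_eq)
  have wi: "w$i = k*\<theta>$i" using ki th[rule_format, of i] by (simp add: field_simps)
  have "(\<Sum>j\<in>UNIV. L$i$j * (w$j - k*\<theta>$j)) \<ge> 0"
    by (rule row_nonneg[OF offd]) (use wle wi in auto)
  hence Lw: "(\<Sum>j\<in>UNIV. L$i$j * w$j) \<ge> 0" using ker sum_lin_split[of L i "\<lambda>j. w$j" k "\<lambda>j. \<theta>$j"] by simp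
  from eq have "\<mu> * (\<Sum>j\<in>UNIV. L$i$j * w$j) + w$i*(p$i - w$i) = 0" unfolding is_equilibrium_def by blast
  moreover have "\<mu> * (\<Sum>j\<in>UNIV. L$i$j * w$j) \<ge> 0" using Lw mu by simp
  ultimately have "w$i*(p$i - w$i) \<le> 0" by linarith
  hence "w$i \<ge> p$i" using wp[rule_format, of i] by (simp add: mult_le_0_iff)
  hence "k \<ge> p$i/\<theta>$i" using ki th[rule_format, of i] by (simp add: divide_right_mono)
  have "Min (range (\<lambda>i. p$i/\<theta>$i)) \<le> p$i/\<theta>$i" by (intro Min_le) auto
  also have "\<dots> \<le> k" by fact
  finally show ?thesis using wle[of j] th mult_right_mono[of _ k "\<theta>$j"] by (smt (verit))
qed

lemma equil_unique_le:
  fixes L :: "real^'n^'n"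
  assumes offd: "\<forall>i j. i \<noteq> j \<longrightarrow> 0 \<le> L$i$j"
    and mu: "\<mu> > 0"
    and eqv: "is_equilibrium L \<mu> p v" and vp: "\<forall>i. v$i > 0"
    and eqw: "is_equilibrium L \<mu> p w" and wp: "\<forall>i. w$i > 0"
  shows "v$j \<le> w$j"
proof -
  let ?r = "\<lambda>i. v$i/w$i"
  define k where "k = Max (range ?r)"
  have "k \<in> range ?r" unfolding k_def by (intro Max_in) auto
  then obtain i where ki: "k = v$i/w$i" by auto
  have rle: "?r j \<le> k" for j unfolding k_def by (intro Max_ge) auto
  have vle: "v$j \<le> k*w$j" for j using rle[of j] wp by (simp add: pos_divide_le_eq)
  have vi: "v$i = k*w$i" using ki wp[rule_format, of i] by (simp add: field_simps)
  have "(\<Sum>j\<in>UNIV. L$i$j * (v$j - k*w$j)) \<le> 0"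
    by (rule row_nonpos[OF offd]) (use vle vi in auto)
  hence Lw: "(\<Sum>j\<in>UNIV. L$i$j * v$j) \<le> k * (\<Sum>j\<in>UNIV. L$i$j * w$j)"
    using sum_lin_split[of L i "\<lambda>j. v$j" k "\<lambda>j. w$j"] by simp
  from eqv have e1: "\<mu> * (\<Sum>j\<in>UNIV. L$i$j * v$j) = - (v$i*(p$i - v$i))" unfolding is_equilibrium_def by (simp add: eq_neg_iff_add_eq_0)
  from eqw have e2: "\<mu> * (\<Sum>j\<in>UNIV. L$i$j * w$j) = - (w$i*(p$i - w$i))" unfolding is_equilibrium_def by (simp add: eq_neg_iff_add_eq_0)
  have "\<mu> * (\<Sum>j\<in>UNIV. L$i$j * v$j) \<le> k * (\<mu> * (\<Sum>j\<in>UNIV. L$i$j * w$j))"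
    using mult_left_mono[OF Lw, of \<mu>] mu by (simp add: mult_ac)
  hence "- (v$i*(p$i - v$i)) \<le> - (v$i*(p$i - w$i))" unfolding e1 e2 vi by (simp add: mult_ac)
  hence "v$i * v$i \<le> v$i * w$i" by (simp add: algebra_simps)
  hence "v$i \<le> w$i" using vp by (meson mult_le_cancel_left_pos)
  hence "k \<le> 1" using ki wp by simp
  thus ?thesis using vle[of j] wp mult_right_mono[of k 1 "w$j"] by (smt (verit))
qed

lemma equil_exists:
  fixes L :: "real^'n^'n"
  assumes offd: "\<forall>i j. i \<noteq> j \<longrightarrow> 0 \<le> L$i$j"
    and ker: "\<forall>i. (\<Sum>j\<in>UNIV. L$i$j * \<theta>$j) = 0"
    and th: "\<forall>i. \<theta>$i > 0" and pp: "\<forall>i. p$i > 0" and mu: "\<mu> > 0"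
  shows "\<exists>w. (\<forall>i. w$i > 0) \<and> is_equilibrium L \<mu> p w"
proof -
  define M where "M = Max (range (\<lambda>i. p$i/\<theta>$i))"
  define m where "m = Min (range (\<lambda>i. p$i/\<theta>$i))"
  have pM: "p$i \<le> M*\<theta>$i" for i
  proof -
    have "p$i/\<theta>$i \<le> M" unfolding M_def by (intro Max_ge) auto
    thus ?thesis using th[rule_format, of i] by (simp add: pos_divide_le_eq)
  qed
  have mp: "m*\<theta>$i \<le> p$i" for i
  proof -
    have "p$i/\<theta>$i \<ge> m" unfolding m_def by (intro Min_le) auto
    thus ?thesis using th[rule_format, of i] by (simp add: pos_le_divide_eq)
  qed
  have "m \<in> range (\<lambda>i. p$i/\<theta>$i)" unfolding m_def by (intro Min_in) auto
  then obtain i0 where "m = p$i0/\<theta>$i0" by auto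
  hence mpos: "m > 0" using th pp by simp
  have "m*\<theta>$i0 \<le> M*\<theta>$i0" using mp[of i0] pM[of i0] by linarith
  hence mM: "m \<le> M" using th[rule_format, of i0] by simp
  define h where "h = 1/(1 + (\<Sum>i\<in>UNIV. \<mu>*\<bar>L$i$i\<bar> + 2*M*\<theta>$i))"
  have Mpos: "M > 0" using mpos mM by simp
  have sumnn: "(\<Sum>i\<in>UNIV. \<mu>*\<bar>L$i$i\<bar> + 2*M*\<theta>$i) \<ge> 0"
    using mu Mpos th by (intro sum_nonneg) (simp add: less_imp_le)
  have hpos: "h > 0" unfolding h_def using sumnn by simp
  have hi: "h*(\<mu>*\<bar>L$i$i\<bar> + 2*M*\<theta>$i) \<le> 1" for i
  proof -
    have "\<mu>*\<bar>L$i$i\<bar> + 2*M*\<theta>$i \<le> (\<Sum>i\<in>UNIV. \<mu>*\<bar>L$i$i\<bar> + 2*M*\<theta>$i)"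
      using mu Mpos th by (intro member_le_sum) (auto simp: less_imp_le)
    thus ?thesis unfolding h_def using sumnn by (simp add: divide_le_eq)
  qed
  define S where "S = cbox (m *\<^sub>R \<theta>) (M *\<^sub>R \<theta>)"
  define f where "f w = (\<chi> i. w$i + h*(\<mu>*(\<Sum>j\<in>UNIV. L$i$j*w$j) + w$i*(p$i - w$i)))" for w :: "real^'n"
  have memS: "w \<in> S \<longleftrightarrow> (\<forall>i. m*\<theta>$i \<le> w$i \<and> w$i \<le> M*\<theta>$i)" for w
    unfolding S_def mem_box_cart by simp
  have cont: "continuous_on S f"
    unfolding f_def by (intro continuous_intros)
  have fS: "f \<in> S \<rightarrow> S"
  proof
    fix w assume "w \<in> S"
    hence wb: "\<And>i. m*\<theta>$i \<le> w$i \<and> w$i \<le> M*\<theta>$i" using memS by blast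
    have wpos: "w$i > 0" for i
    proof -
      have "m*\<theta>$i > 0" using mpos th by simp
      thus ?thesis using wb[of i] by linarith
    qed
    have "m*\<theta>$i \<le> f w $ i \<and> f w $ i \<le> M*\<theta>$i" for i
    proof
      define Sw where "Sw = (\<Sum>j\<in>UNIV. L$i$j*w$j)"
      have fi: "f w $ i = w$i + h*\<mu>*Sw + h*(w$i*(p$i - w$i))"
        unfolding f_def Sw_def by (simp add: algebra_simps)
      have "M*\<theta>$i > 0" using Mpos th by simp
      hence "w$i \<le> 2*M*\<theta>$i" using wb[of i] by linarith
      hence "h*(\<mu>*\<bar>L$i$i\<bar> + w$i) \<le> h*(\<mu>*\<bar>L$i$i\<bar> + 2*M*\<theta>$i)"
        using hpos by (intro mult_left_mono) auto
      hence hX: "h*(\<mu>*\<bar>L$i$i\<bar> + w$i) \<le> 1" using hi[of i] by linarith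
      have hmu: "h*\<mu> \<ge> 0" using hpos mu by simp
      {
        define d where "d = M*\<theta>$i - w$i"
        have d0: "d \<ge> 0" using wb[of i] d_def by simp
        have "(\<Sum>j\<in>UNIV. L$i$j * (M*\<theta>$j - w$j)) \<ge> L$i$i * (M*\<theta>$i - w$i)"
          by (rule row_ge_diag[OF offd]) (use wb in auto)
        moreover have "(\<Sum>j\<in>UNIV. L$i$j * (M*\<theta>$j - w$j)) = - Sw"
          using ker unfolding Sw_def
          by (simp add: right_diff_distrib sum_subtractf sum_distrib_left[symmetric] mult.left_commute[of _ M])
        ultimately have SwB: "Sw \<le> - (L$i$i * d)" unfolding d_def by simp
        have A1: "h*\<mu>*Sw \<le> h*\<mu>*(- (L$i$i * d))" using mult_left_mono[OF SwB hmu] .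
        have A2: "h*(w$i*(p$i - w$i)) \<le> h*(w$i*d)"
          using pM[of i] wpos[of i] hpos unfolding d_def by (intro mult_left_mono) auto
        have A3: "h*\<mu>*(- (L$i$i * d)) + h*(w$i*d) \<le> d*(h*(\<mu>*\<bar>L$i$i\<bar> + w$i))"
        proof -
          have "h*\<mu>*(- (L$i$i * d)) + h*(w$i*d) = (d*h)*(\<mu>*(- L$i$i) + w$i)" by (simp add: algebra_simps)
          also have "\<dots> \<le> (d*h)*(\<mu>*\<bar>L$i$i\<bar> + w$i)"
            using d0 hpos mu mult_left_mono[of "- L$i$i" "\<bar>L$i$i\<bar>" \<mu>] by (intro mult_left_mono) auto
          finally show ?thesis by (simp add: algebra_simps)
        qed
        have A4: "d*(h*(\<mu>*\<bar>L$i$i\<bar> + w$i)) \<le> d" using mult_left_mono[OF hX d0] by simp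
        show "f w $ i \<le> M*\<theta>$i" using fi A1 A2 A3 A4 d_def by linarith
      }
      {
        define d where "d = w$i - m*\<theta>$i"
        have d0: "d \<ge> 0" using wb[of i] d_def by simp
        have "(\<Sum>j\<in>UNIV. L$i$j * (w$j - m*\<theta>$j)) \<ge> L$i$i * (w$i - m*\<theta>$i)"
          by (rule row_ge_diag[OF offd]) (use wb in auto)
        moreover have "(\<Sum>j\<in>UNIV. L$i$j * (w$j - m*\<theta>$j)) = Sw"
          using ker sum_lin_split[of L i "\<lambda>j. w$j" m "\<lambda>j. \<theta>$j"] unfolding Sw_def by simp
        ultimately have SwB: "Sw \<ge> L$i$i * d" unfolding d_def by simp
        have A1: "h*\<mu>*Sw \<ge> h*\<mu>*(L$i$i * d)" using mult_left_mono[OF SwB hmu] .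
        have A2: "h*(w$i*(p$i - w$i)) \<ge> h*(w$i*(-d))"
          using mp[of i] wpos[of i] hpos unfolding d_def by (intro mult_left_mono) auto
        have A3: "h*\<mu>*(L$i$i * d) + h*(w$i*(-d)) \<ge> - (d*(h*(\<mu>*\<bar>L$i$i\<bar> + w$i)))"
        proof -
          have "h*\<mu>*(L$i$i * d) + h*(w$i*(-d)) = - ((d*h)*(\<mu>*(- L$i$i) + w$i))" by (simp add: algebra_simps)
          moreover have "(d*h)*(\<mu>*(- L$i$i) + w$i) \<le> (d*h)*(\<mu>*\<bar>L$i$i\<bar> + w$i)"
            using d0 hpos mu mult_left_mono[of "- L$i$i" "\<bar>L$i$i\<bar>" \<mu>] by (intro mult_left_mono) auto
          ultimately show ?thesis by (simp add: algebra_simps)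
        qed
        have A4: "d*(h*(\<mu>*\<bar>L$i$i\<bar> + w$i)) \<le> d" using mult_left_mono[OF hX d0] by simp
        show "m*\<theta>$i \<le> f w $ i" using fi A1 A2 A3 A4 d_def by linarith
      }
    qed
    thus "f w \<in> S" using memS by blast
  qed
  have "compact S" "convex S" unfolding S_def by auto
  moreover have "S \<noteq> {}" using memS[of "m *\<^sub>R \<theta>"] mM th
    by (auto intro!: mult_right_mono less_imp_le)
  ultimately obtain w where wS: "w \<in> S" and fw: "f w = w" using brouwer[OF _ _ _ cont fS] by blast
  have wpos: "w$i > 0" for i
  proof -
    have "m*\<theta>$i > 0" using mpos th by simp
    thus ?thesis using wS memS by (meson less_le_trans)
  qed
  have "is_equilibrium L \<mu> p w" unfolding is_equilibrium_def
  proof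
    fix i
    have "f w $ i = w $ i" using fw by simp
    hence "h*(\<mu>*(\<Sum>j\<in>UNIV. L$i$j*w$j) + w$i*(p$i - w$i)) = 0" unfolding f_def by simp
    thus "\<mu>*(\<Sum>j\<in>UNIV. L$i$j*w$j) + w$i*(p$i - w$i) = 0" using hpos by simp
  qed
  thus ?thesis using wpos by blast
qed

lemma wstar_prop:
  fixes L :: "real^'n^'n"
  assumes offd: "\<forall>i j. i \<noteq> j \<longrightarrow> 0 \<le> L$i$j"
    and ker: "\<forall>i. (\<Sum>j\<in>UNIV. L$i$j * \<theta>$j) = 0"
    and th: "\<forall>i. \<theta>$i > 0" and pp: "\<forall>i. p$i > 0" and mu: "\<mu> > 0"
  shows "(\<forall>i. wstar L \<mu> p $ i > 0) \<and> is_equilibrium L \<mu> p (wstar L \<mu> p)"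
proof -
  have "\<exists>!w. strictly_pos w \<and> is_equilibrium L \<mu> p w"
  proof -
    obtain w where w: "(\<forall>i. w$i > 0) \<and> is_equilibrium L \<mu> p w"
      using equil_exists[OF offd ker th pp mu] by blast
    show ?thesis
    proof (rule ex1I[of _ w])
      show "strictly_pos w \<and> is_equilibrium L \<mu> p w" using w unfolding strictly_pos_def by blast
      fix v assume v: "strictly_pos v \<and> is_equilibrium L \<mu> p v"
      show "v = w" unfolding vec_eq_iff
      proof
        fix j
        show "v$j = w$j"
          using equil_unique_le[OF offd mu, of p v w j] equil_unique_le[OF offd mu, of p w v j] v w
          unfolding strictly_pos_def by fastforce
      qed
    qed
  qed
  from theI'[OF this] show ?thesis unfolding wstar_def strictly_pos_def by blast
qed

lemma colsum_zero:
  fixes L :: "real^'n^'n"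
  assumes col: "\<forall>j. (\<Sum>i\<in>UNIV. L$i$j) = 0"
  shows "(\<Sum>i\<in>UNIV. \<Sum>j\<in>UNIV. L$i$j * v j) = 0"
proof -
  have "(\<Sum>i\<in>UNIV. \<Sum>j\<in>UNIV. L$i$j * v j) = (\<Sum>j\<in>UNIV. \<Sum>i\<in>UNIV. L$i$j * v j)"
    by (rule sum.swap)
  also have "\<dots> = (\<Sum>j\<in>UNIV. (\<Sum>i\<in>UNIV. L$i$j) * v j)" by (simp add: sum_distrib_right)
  also have "\<dots> = 0" using col by simp
  finally show ?thesis .
qed

lemma kernel_dim1:
  fixes L :: "real^'n^'n"
  assumes offd: "\<forall>i j. i \<noteq> j \<longrightarrow> 0 \<le> L$i$j"
    and ker: "\<forall>i. (\<Sum>j\<in>UNIV. L$i$j * \<theta>$j) = 0"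
    and th: "\<forall>i. \<theta>$i > 0" and irr: "irreducible_mat L"
    and Lv: "\<forall>i. (\<Sum>j\<in>UNIV. L$i$j * v$j) = 0"
  shows "\<exists>t. \<forall>j. v$j = t*\<theta>$j"
proof -
  let ?r = "\<lambda>i. v$i/\<theta>$i"
  define t where "t = Max (range ?r)"
  have "t \<in> range ?r" unfolding t_def by (intro Max_in) auto
  then obtain i0 where ti: "t = v$i0/\<theta>$i0" by auto
  have rle: "?r j \<le> t" for j unfolding t_def by (intro Max_ge) auto
  define u where "u j = v$j - t*\<theta>$j" for j
  have u0: "u j \<le> 0" for j using rle[of j] th[rule_format, of j] unfolding u_def by (simp add: pos_divide_le_eq)
  have ui0: "u i0 = 0" using ti th[rule_format, of i0] unfolding u_def by (simp add: field_simps)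
  define S where "S = {i. u i = 0}"
  have Lu: "(\<Sum>j\<in>UNIV. L$i$j * u j) = 0" for i
    using sum_lin_split[of L i "\<lambda>j. v$j" t "\<lambda>j. \<theta>$j"] Lv ker unfolding u_def by simp
  have blk: "\<forall>i\<in>S. \<forall>j\<in>UNIV - S. L$i$j = 0"
  proof (intro ballI)
    fix i j assume iS: "i \<in> S" and jS: "j \<in> UNIV - S"
    have nn: "\<forall>k\<in>UNIV. 0 \<le> - (L$i$k * u k)"
    proof
      fix k show "0 \<le> - (L$i$k * u k)"
        using offd u0[of k] iS unfolding S_def by (cases "i = k") (auto simp: mult_nonneg_nonpos)
    qed
    have "(\<Sum>k\<in>UNIV. - (L$i$k * u k)) = 0" using Lu[of i] by (simp add: sum_negf)
    hence "\<forall>k\<in>UNIV. - (L$i$k * u k) = 0" using sum_nonneg_eq_0_iff[of UNIV "\<lambda>k. - (L$i$k * u k)"] nn finite_UNIV by simp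
    hence "L$i$j * u j = 0" by simp
    moreover have "u j \<noteq> 0" using jS unfolding S_def by simp
    ultimately show "L$i$j = 0" by simp
  qed
  have "S \<noteq> {}" using ui0 unfolding S_def by auto
  hence "S = UNIV" using irr blk unfolding irreducible_mat_def by blast
  hence "\<forall>j. v$j = t*\<theta>$j" unfolding S_def u_def by auto
  thus ?thesis by blast
qed

definition Tmap :: "real^'n^'n \<Rightarrow> real^'n \<Rightarrow> real^'n \<Rightarrow> real^'n" where
  "Tmap L \<theta> v = (\<chi> i. (\<Sum>j\<in>UNIV. L$i$j * v$j) + (\<Sum>j\<in>UNIV. v$j) * \<theta>$i)"

lemma Tmap_linear: "linear (Tmap L \<theta>)"
  unfolding linear_iff Tmap_def vec_eq_iff
  by (simp add: sum.distrib distrib_left distrib_right sum_distrib_left algebra_simps)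

lemma T_bound:
  fixes L :: "real^'n^'n"
  assumes offd: "\<forall>i j. i \<noteq> j \<longrightarrow> 0 \<le> L$i$j"
    and col: "\<forall>j. (\<Sum>i\<in>UNIV. L$i$j) = 0"
    and ker: "\<forall>i. (\<Sum>j\<in>UNIV. L$i$j * \<theta>$j) = 0"
    and th: "\<forall>i. \<theta>$i > 0" and irr: "irreducible_mat L"
    and ths: "(\<Sum>i\<in>UNIV. \<theta>$i) = 1"
  obtains B where "B > 0" "\<And>v. B * norm v \<le> norm (Tmap L \<theta> v)"
proof -
  have "inj (Tmap L \<theta>)"
    unfolding linear_injective_0[OF Tmap_linear]
  proof (intro allI impI)
    fix v assume T0: "Tmap L \<theta> v = 0"
    define s where "s = (\<Sum>j\<in>UNIV. v$j)"
    have ci: "(\<Sum>j\<in>UNIV. L$i$j * v$j) + s * \<theta>$i = 0" for i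
      using T0 unfolding Tmap_def vec_eq_iff s_def by simp
    have "(\<Sum>i\<in>UNIV. (\<Sum>j\<in>UNIV. L$i$j * v$j) + s * \<theta>$i) = 0" using ci by simp
    hence "(\<Sum>i\<in>UNIV. \<Sum>j\<in>UNIV. L$i$j * v$j) + s * (\<Sum>i\<in>UNIV. \<theta>$i) = 0"
      by (simp add: sum.distrib sum_distrib_left)
    hence s0: "s = 0" using colsum_zero[OF col, of "\<lambda>j. v$j"] ths by simp
    hence "\<forall>i. (\<Sum>j\<in>UNIV. L$i$j * v$j) = 0" using ci by simp
    then obtain t where t: "\<forall>j. v$j = t*\<theta>$j" using kernel_dim1[OF offd ker th irr] by blast
    have "s = t" unfolding s_def using t ths by (simp add: sum_distrib_left[symmetric])
    hence "t = 0" using s0 by simp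
    thus "v = 0" using t by (simp add: vec_eq_iff)
  qed
  from linear_inj_bounded_below_pos[OF Tmap_linear this] that show ?thesis by blast
qed



lemma minmax_props:
  fixes p \<theta> :: "real^'n"
  assumes th: "\<forall>i. \<theta>$i > 0" and pp: "\<forall>i. p$i > 0"
  shows "Min (range (\<lambda>i. p$i/\<theta>$i)) > 0 \<and> Min (range (\<lambda>i. p$i/\<theta>$i)) \<le> Max (range (\<lambda>i. p$i/\<theta>$i))
     \<and> (\<forall>i. p$i \<le> Max (range (\<lambda>i. p$i/\<theta>$i))*\<theta>$i \<and> Min (range (\<lambda>i. p$i/\<theta>$i))*\<theta>$i \<le> p$i)"
proof -
  define M where "M = Max (range (\<lambda>i. p$i/\<theta>$i))"
  define m where "m = Min (range (\<lambda>i. p$i/\<theta>$i))"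
  have pM: "p$i \<le> M*\<theta>$i" for i
  proof -
    have "p$i/\<theta>$i \<le> M" unfolding M_def by (intro Max_ge) auto
    thus ?thesis using th[rule_format, of i] by (simp add: pos_divide_le_eq)
  qed
  have mp: "m*\<theta>$i \<le> p$i" for i
  proof -
    have "p$i/\<theta>$i \<ge> m" unfolding m_def by (intro Min_le) auto
    thus ?thesis using th[rule_format, of i] by (simp add: pos_le_divide_eq)
  qed
  have "m \<in> range (\<lambda>i. p$i/\<theta>$i)" unfolding m_def by (intro Min_in) auto
  then obtain i0 where "m = p$i0/\<theta>$i0" by auto
  hence mpos: "m > 0" using th pp by simp
  have "m*\<theta>$i0 \<le> M*\<theta>$i0" using mp[of i0] pM[of i0] by linarith
  hence mM: "m \<le> M" using th[rule_format, of i0] by simp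
  show ?thesis using mpos mM pM mp unfolding M_def m_def by blast
qed

lemma Lw_bound:
  fixes L :: "real^'n^'n"
  assumes "\<And>j. 0 \<le> w$j \<and> w$j \<le> M*\<theta>$j"
  shows "\<bar>\<Sum>j\<in>UNIV. L$i$j * w$j\<bar> \<le> (\<Sum>j\<in>UNIV. \<bar>L$i$j\<bar> * (M*\<theta>$j))"
proof -
  have "\<bar>\<Sum>j\<in>UNIV. L$i$j * w$j\<bar> \<le> (\<Sum>j\<in>UNIV. \<bar>L$i$j * w$j\<bar>)" by (rule sum_abs)
  also have "\<dots> \<le> (\<Sum>j\<in>UNIV. \<bar>L$i$j\<bar> * (M*\<theta>$j))"
  proof (rule sum_mono)
    fix j show "\<bar>L$i$j * w$j\<bar> \<le> \<bar>L$i$j\<bar> * (M*\<theta>$j)"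
      using assms[of j] by (simp add: abs_mult mult_left_mono)
  qed
  finally show ?thesis .
qed

lemma lim0:
  fixes L :: "real^'n^'n"
  assumes offd: "\<forall>i j. i \<noteq> j \<longrightarrow> 0 \<le> L$i$j"
    and ker: "\<forall>i. (\<Sum>j\<in>UNIV. L$i$j * \<theta>$j) = 0"
    and th: "\<forall>i. \<theta>$i > 0" and pp: "\<forall>i. p$i > 0"
  shows "((\<lambda>\<mu>. wstar L \<mu> p) \<longlongrightarrow> p) (at_right 0)"
proof -
  define M where "M = Max (range (\<lambda>i. p$i/\<theta>$i))"
  define m where "m = Min (range (\<lambda>i. p$i/\<theta>$i))"
  have mm: "m > 0" "m \<le> M" using minmax_props[OF th pp] unfolding M_def m_def by auto
  define C where "C i = (\<Sum>j\<in>UNIV. \<bar>L$i$j\<bar> * (M*\<theta>$j))" for i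
  define K where "K = (\<Sum>i\<in>UNIV. C i / (m*\<theta>$i))"
  have bnd: "norm (wstar L \<mu> p - p) \<le> \<mu> * K" if mu: "\<mu> > 0" for \<mu>
  proof -
    define w where "w = wstar L \<mu> p"
    have wp: "\<forall>i. w$i > 0" and eq: "is_equilibrium L \<mu> p w"
      using wstar_prop[OF offd ker th pp mu] unfolding w_def by auto
    have up: "w$j \<le> M*\<theta>$j" for j using equil_upper[OF offd ker th _ eq wp] mu unfolding M_def by simp
    have lo: "m*\<theta>$j \<le> w$j" for j using equil_lower[OF offd ker th _ eq wp] mu unfolding m_def by simp
    have ci: "\<bar>w$i - p$i\<bar> \<le> \<mu> * (C i / (m*\<theta>$i))" for i
    proof -
      have LB: "\<bar>\<Sum>j\<in>UNIV. L$i$j * w$j\<bar> \<le> C i"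
        unfolding C_def using up wp by (intro Lw_bound) (simp add: less_imp_le)
      have e: "w$i*(p$i - w$i) = - (\<mu> * (\<Sum>j\<in>UNIV. L$i$j * w$j))"
        using eq unfolding is_equilibrium_def by (simp add: eq_neg_iff_add_eq_0 add.commute)
      have "\<bar>w$i*(p$i - w$i)\<bar> = \<mu> * \<bar>\<Sum>j\<in>UNIV. L$i$j * w$j\<bar>"
        unfolding e using mu by (simp add: abs_mult)
      also have "\<dots> \<le> \<mu> * C i" using LB mu by (simp add: mult_left_mono)
      finally have h1: "w$i * \<bar>w$i - p$i\<bar> \<le> \<mu> * C i" using wp[rule_format, of i] by (simp add: abs_mult abs_minus_commute)
      have mt: "m*\<theta>$i > 0" using mm th by simp
      have "(m*\<theta>$i) * \<bar>w$i - p$i\<bar> \<le> w$i * \<bar>w$i - p$i\<bar>" using lo[of i] by (simp add: mult_right_mono)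
      hence "(m*\<theta>$i) * \<bar>w$i - p$i\<bar> \<le> \<mu> * C i" using h1 by linarith
      hence "\<bar>w$i - p$i\<bar> \<le> (\<mu> * C i) / (m*\<theta>$i)" using mt by (simp add: pos_le_divide_eq mult.commute)
      thus ?thesis by simp
    qed
    have "norm (w - p) \<le> (\<Sum>i\<in>UNIV. \<bar>(w - p)$i\<bar>)" by (rule norm_le_l1_cart)
    also have "\<dots> \<le> (\<Sum>i\<in>UNIV. \<mu> * (C i / (m*\<theta>$i)))" using ci by (intro sum_mono) simp
    also have "\<dots> = \<mu> * K" unfolding K_def by (simp add: sum_distrib_left)
    finally show ?thesis unfolding w_def .
  qed
  have ev: "eventually (\<lambda>\<mu>. norm (wstar L \<mu> p - p) \<le> \<mu> * K) (at_right 0)"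
    using eventually_at_right_less[of 0] by (rule eventually_mono) (use bnd in auto)
  have g: "((\<lambda>\<mu>. \<mu> * K) \<longlongrightarrow> 0) (at_right (0::real))"
  proof -
    have "((\<lambda>\<mu>. \<mu> * K) \<longlongrightarrow> 0 * K) (at_right (0::real))" by (intro tendsto_intros)
    thus ?thesis by simp
  qed
  have "((\<lambda>\<mu>. wstar L \<mu> p - p) \<longlongrightarrow> 0) (at_right 0)" by (rule Lim_null_comparison[OF ev g])
  thus ?thesis by (simp add: Lim_null[symmetric])
qed

lemma limtop:
  fixes L :: "real^'n^'n"
  assumes offd: "\<forall>i j. i \<noteq> j \<longrightarrow> 0 \<le> L$i$j"
    and col: "\<forall>j. (\<Sum>i\<in>UNIV. L$i$j) = 0"
    and ker: "\<forall>i. (\<Sum>j\<in>UNIV. L$i$j * \<theta>$j) = 0"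
    and th: "\<forall>i. \<theta>$i > 0" and pp: "\<forall>i. p$i > 0" and irr: "irreducible_mat L"
    and ths: "(\<Sum>i\<in>UNIV. \<theta>$i) = 1"
  shows "((\<lambda>\<mu>. wstar L \<mu> p) \<longlongrightarrow>
               ((\<Sum>i\<in>UNIV. \<theta> $ i * p $ i) / (\<Sum>i\<in>UNIV. (\<theta> $ i)^2)) *\<^sub>R \<theta>) at_top"
proof -
  define M where "M = Max (range (\<lambda>i. p$i/\<theta>$i))"
  define m where "m = Min (range (\<lambda>i. p$i/\<theta>$i))"
  have mm: "m > 0" "m \<le> M" using minmax_props[OF th pp] unfolding M_def m_def by auto
  obtain B where B: "B > 0" "\<And>v. B * norm v \<le> norm (Tmap L \<theta> v)"
    using T_bound[OF offd col ker th irr ths] by blast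
  define P where "P = (\<Sum>i\<in>UNIV. \<theta> $ i * p $ i)"
  define Q where "Q = (\<Sum>i\<in>UNIV. (\<theta> $ i)^2)"
  have Qpos: "Q > 0" unfolding Q_def using th by (intro sum_pos) (auto simp: less_le)
  define c where "c = P / Q"
  define C0 where "C0 = (\<Sum>i\<in>UNIV. M*\<theta>$i*(p$i + M*\<theta>$i))"
  define R where "R = (\<Sum>i\<in>UNIV. p$i + 2*M*\<theta>$i)"
  define K where "K = (C0/B) * (R * norm \<theta> / (m*Q) + 1)"
  have bnd: "norm (wstar L \<mu> p - c *\<^sub>R \<theta>) \<le> K / \<mu>" if mu: "\<mu> > 0" for \<mu>
  proof -
    define w where "w = wstar L \<mu> p"
    have wp: "\<forall>i. w$i > 0" and eq: "is_equilibrium L \<mu> p w"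
      using wstar_prop[OF offd ker th pp mu] unfolding w_def by auto
    have up: "w$j \<le> M*\<theta>$j" for j using equil_upper[OF offd ker th _ eq wp] mu unfolding M_def by simp
    have lo: "m*\<theta>$j \<le> w$j" for j using equil_lower[OF offd ker th _ eq wp] mu unfolding m_def by simp
    define s where "s = (\<Sum>j\<in>UNIV. w$j)"
    define v where "v = w - s *\<^sub>R \<theta>"
    have vi: "v$i = w$i - s*\<theta>$i" for i unfolding v_def by simp
    have e: "w$i*(p$i - w$i) = - (\<mu> * (\<Sum>j\<in>UNIV. L$i$j * w$j))" for i
      using eq unfolding is_equilibrium_def by (simp add: eq_neg_iff_add_eq_0 add.commute)
    have sM: "s \<le> M"
    proof -
      have "s \<le> (\<Sum>j\<in>UNIV. M*\<theta>$j)" unfolding s_def using up by (intro sum_mono) auto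
      thus ?thesis using ths by (simp add: sum_distrib_left[symmetric])
    qed
    have sm: "m \<le> s"
    proof -
      have "(\<Sum>j\<in>UNIV. m*\<theta>$j) \<le> s" unfolding s_def using lo by (intro sum_mono) auto
      thus ?thesis using ths by (simp add: sum_distrib_left[symmetric])
    qed
    have Tv: "Tmap L \<theta> v = (\<chi> i. (\<Sum>j\<in>UNIV. L$i$j * w$j))"
    proof -
      have "(\<Sum>j\<in>UNIV. v$j) = 0" unfolding vi s_def using ths
        by (simp add: sum_subtractf sum_distrib_left[symmetric])
      moreover have "(\<Sum>j\<in>UNIV. L$i$j * v$j) = (\<Sum>j\<in>UNIV. L$i$j * w$j)" for i
        using sum_lin_split[of L i "\<lambda>j. w$j" s "\<lambda>j. \<theta>$j"] ker unfolding vi by simp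
      ultimately show ?thesis unfolding Tmap_def by simp
    qed
    have Lwi: "\<bar>\<Sum>j\<in>UNIV. L$i$j * w$j\<bar> \<le> (M*\<theta>$i*(p$i + M*\<theta>$i)) / \<mu>" for i
    proof -
      have "\<mu> * \<bar>\<Sum>j\<in>UNIV. L$i$j * w$j\<bar> = \<bar>w$i*(p$i - w$i)\<bar>" unfolding e using mu by (simp add: abs_mult)
      also have "\<dots> = w$i * \<bar>p$i - w$i\<bar>" using wp[rule_format, of i] by (simp add: abs_mult)
      also have "\<dots> \<le> w$i * (p$i + M*\<theta>$i)"
        using wp[rule_format, of i] pp[rule_format, of i] up[of i]
        by (intro mult_left_mono) auto
      also have "\<dots> \<le> (M*\<theta>$i) * (p$i + M*\<theta>$i)"
        using up[of i] pp[rule_format, of i] wp[rule_format, of i] by (intro mult_right_mono) auto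
      finally show ?thesis using mu by (simp add: pos_le_divide_eq mult.commute)
    qed
    have "B * norm v \<le> norm (Tmap L \<theta> v)" by (rule B(2))
    also have "\<dots> \<le> (\<Sum>i\<in>UNIV. \<bar>Tmap L \<theta> v $ i\<bar>)" by (rule norm_le_l1_cart)
    also have "\<dots> \<le> (\<Sum>i\<in>UNIV. (M*\<theta>$i*(p$i + M*\<theta>$i)) / \<mu>)"
      unfolding Tv using Lwi by (intro sum_mono) simp
    also have "\<dots> = C0 / \<mu>" unfolding C0_def by (simp add: sum_divide_distrib)
    finally have Bv: "B * norm v \<le> C0 / \<mu>" .
    have "norm v \<le> (C0 / \<mu>) / B" unfolding pos_le_divide_eq[OF B(1)] using Bv by (simp add: mult.commute)
    hence vB: "norm v \<le> C0 / (B * \<mu>)" by (simp add: mult.commute)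
    have S0: "(\<Sum>i\<in>UNIV. w$i*(p$i - w$i)) = 0"
    proof -
      have "(\<Sum>i\<in>UNIV. w$i*(p$i - w$i)) = - (\<mu> * (\<Sum>i\<in>UNIV. \<Sum>j\<in>UNIV. L$i$j * w$j))"
        unfolding e by (simp add: sum_negf sum_distrib_left)
      thus ?thesis using colsum_zero[OF col, of "\<lambda>j. w$j"] by simp
    qed
    have Sid: "(\<Sum>i\<in>UNIV. w$i*(p$i - w$i)) = s*P - s*(s*Q) + (\<Sum>i\<in>UNIV. v$i*(p$i - w$i - s*\<theta>$i))"
    proof -
      have "(\<Sum>i\<in>UNIV. w$i*(p$i - w$i)) = (\<Sum>i\<in>UNIV. s*(\<theta>$i*p$i) - s*(s*(\<theta>$i)^2) + v$i*(p$i - w$i - s*\<theta>$i))"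
        by (rule sum.cong) (simp_all add: vi algebra_simps power2_eq_square)
      also have "\<dots> = s*P - s*(s*Q) + (\<Sum>i\<in>UNIV. v$i*(p$i - w$i - s*\<theta>$i))"
        unfolding P_def Q_def by (simp add: sum.distrib sum_subtractf sum_distrib_left)
      finally show ?thesis .
    qed
    have Rb: "\<bar>\<Sum>i\<in>UNIV. v$i*(p$i - w$i - s*\<theta>$i)\<bar> \<le> norm v * R"
    proof -
      have "\<bar>\<Sum>i\<in>UNIV. v$i*(p$i - w$i - s*\<theta>$i)\<bar> \<le> (\<Sum>i\<in>UNIV. \<bar>v$i*(p$i - w$i - s*\<theta>$i)\<bar>)" by (rule sum_abs)
      also have "\<dots> \<le> (\<Sum>i\<in>UNIV. norm v * (p$i + 2*M*\<theta>$i))"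
      proof (rule sum_mono)
        fix i
        have a: "\<bar>v$i\<bar> \<le> norm v" by (rule component_le_norm_cart)
        have "s*\<theta>$i \<le> M*\<theta>$i" using sM th[rule_format, of i] by (simp add: mult_right_mono)
        moreover have "0 \<le> s*\<theta>$i" using sm mm th[rule_format, of i] by simp
        ultimately have b: "\<bar>p$i - w$i - s*\<theta>$i\<bar> \<le> p$i + 2*M*\<theta>$i"
          using up[of i] wp[rule_format, of i] pp[rule_format, of i] by linarith
        show "\<bar>v$i*(p$i - w$i - s*\<theta>$i)\<bar> \<le> norm v * (p$i + 2*M*\<theta>$i)"
          unfolding abs_mult by (rule mult_mono[OF a b]) auto
      qed
      also have "\<dots> = norm v * R" unfolding R_def by (simp add: sum_distrib_left)
      finally show ?thesis .
    qed
    have "s * \<bar>P - s*Q\<bar> \<le> norm v * R"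
    proof -
      have "s*(P - s*Q) = - (\<Sum>i\<in>UNIV. v$i*(p$i - w$i - s*\<theta>$i))" using S0 Sid by (simp add: algebra_simps)
      hence "s * \<bar>P - s*Q\<bar> = \<bar>\<Sum>i\<in>UNIV. v$i*(p$i - w$i - s*\<theta>$i)\<bar>" using sm mm
        by (metis abs_minus_cancel abs_mult abs_of_pos less_le_trans)
      thus ?thesis using Rb by simp
    qed
    moreover have "m * \<bar>P - s*Q\<bar> \<le> s * \<bar>P - s*Q\<bar>" using sm by (simp add: mult_right_mono)
    ultimately have "m * \<bar>P - s*Q\<bar> \<le> norm v * R" by linarith
    hence "\<bar>P - s*Q\<bar> \<le> norm v * R / m" using mm by (simp add: pos_le_divide_eq mult.commute)
    moreover have "\<bar>s - c\<bar> = \<bar>P - s*Q\<bar> / Q" unfolding c_def using Qpos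
      by (simp add: abs_div_pos[symmetric] field_simps abs_minus_commute)
    ultimately have "\<bar>s - c\<bar> \<le> (norm v * R / m) / Q" using Qpos
      by (metis divide_right_mono less_imp_le)
    hence sc: "\<bar>s - c\<bar> \<le> norm v * (R / (m*Q))" by simp
    have "w - c *\<^sub>R \<theta> = (s - c) *\<^sub>R \<theta> + v" unfolding v_def by (simp add: algebra_simps)
    hence "norm (w - c *\<^sub>R \<theta>) \<le> \<bar>s - c\<bar> * norm \<theta> + norm v"
      by (metis norm_scaleR norm_triangle_ineq)
    also have "\<dots> \<le> norm v * (R / (m*Q)) * norm \<theta> + norm v"
      using mult_right_mono[OF sc norm_ge_zero[of \<theta>]] by simp
    also have "\<dots> = norm v * (R * norm \<theta> / (m*Q) + 1)" by (simp add: algebra_simps)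
    also have "\<dots> \<le> C0 / (B * \<mu>) * (R * norm \<theta> / (m*Q) + 1)"
    proof (rule mult_right_mono[OF vB])
      have "R \<ge> 0" unfolding R_def using pp th mm by (intro sum_nonneg) (simp add: less_imp_le)
      thus "0 \<le> R * norm \<theta> / (m*Q) + 1" using mm Qpos by simp
    qed
    also have "\<dots> = K / \<mu>" unfolding K_def by simp
    finally show ?thesis unfolding w_def .
  qed
  have ev: "eventually (\<lambda>\<mu>. norm (wstar L \<mu> p - c *\<^sub>R \<theta>) \<le> K / \<mu>) at_top"
    using eventually_gt_at_top[of 0] by (rule eventually_mono) (use bnd in auto)
  have g: "((\<lambda>\<mu>. K / \<mu>) \<longlongrightarrow> 0) (at_top :: real filter)"
    by (rule real_tendsto_divide_at_top[OF tendsto_const filterlim_ident])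
  have "((\<lambda>\<mu>. wstar L \<mu> p - c *\<^sub>R \<theta>) \<longlongrightarrow> 0) at_top" by (rule Lim_null_comparison[OF ev g])
  thus ?thesis unfolding c_def P_def Q_def by (simp add: Lim_null[symmetric])
qed


lemma conn_props:
  fixes A :: "real^'n^'n"
  assumes A_nonneg: "\<forall>i j. i \<noteq> j \<longrightarrow> A $ i $ j \<ge> 0"
  shows "\<forall>i j. i \<noteq> j \<longrightarrow> 0 \<le> connection_matrix A $ i $ j"
    and "\<forall>j. (\<Sum>i\<in>UNIV. connection_matrix A $ i $ j) = 0"
proof -
  show "\<forall>i j. i \<noteq> j \<longrightarrow> 0 \<le> connection_matrix A $ i $ j"
    using A_nonneg unfolding connection_matrix_def by simp
  show "\<forall>j. (\<Sum>i\<in>UNIV. connection_matrix A $ i $ j) = 0"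
  proof
    fix j
    have "(\<Sum>i\<in>UNIV. connection_matrix A $ i $ j) = connection_matrix A $ j $ j + (\<Sum>i\<in>UNIV-{j}. connection_matrix A $ i $ j)"
      by (simp add: sum.remove)
    also have "(\<Sum>i\<in>UNIV-{j}. connection_matrix A $ i $ j) = (\<Sum>i\<in>UNIV-{j}. A $ i $ j)"
      by (rule sum.cong) (auto simp: connection_matrix_def)
    finally show "(\<Sum>i\<in>UNIV. connection_matrix A $ i $ j) = 0" by (simp add: connection_matrix_def)
  qed
qed

theorem mainTheorem10:
  fixes A :: "real^'n^'n" and p \<theta> :: "real^'n"
  assumes n2: "CARD('n) \<ge> 2"
    and A_nonneg: "\<forall>i j. i \<noteq> j \<longrightarrow> A $ i $ j \<ge> 0"
    and irr: "irreducible_mat (connection_matrix A)"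
    and p_pos: "strictly_pos p"
    and theta_pos: "strictly_pos \<theta>"
    and theta_ker: "connection_matrix A *v \<theta> = 0"
    and theta_sum: "(\<Sum>i\<in>UNIV. \<theta> $ i) = 1"
  shows "(\<exists>m M. 0 < m \<and> m \<le> M \<and>
            (\<forall>\<mu>>0. \<forall>i. m * \<theta> $ i \<le> wstar (connection_matrix A) \<mu> p $ i
                     \<and> wstar (connection_matrix A) \<mu> p $ i \<le> M * \<theta> $ i))
         \<and> ((\<lambda>\<mu>. wstar (connection_matrix A) \<mu> p) \<longlongrightarrow> p) (at_right 0)
         \<and> ((\<lambda>\<mu>. wstar (connection_matrix A) \<mu> p) \<longlongrightarrow>
               ((\<Sum>i\<in>UNIV. \<theta> $ i * p $ i) / (\<Sum>i\<in>UNIV. (\<theta> $ i)^2)) *\<^sub>R \<theta>) at_top"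
proof -
  define L where "L = connection_matrix A"
  have offd: "\<forall>i j. i \<noteq> j \<longrightarrow> 0 \<le> L$i$j" and col: "\<forall>j. (\<Sum>i\<in>UNIV. L$i$j) = 0"
    using conn_props[OF A_nonneg] unfolding L_def by auto
  have ker: "\<forall>i. (\<Sum>j\<in>UNIV. L$i$j * \<theta>$j) = 0"
    using theta_ker unfolding L_def vec_eq_iff matrix_vector_mult_def by simp
  have th: "\<forall>i. \<theta>$i > 0" and pp: "\<forall>i. p$i > 0"
    using theta_pos p_pos unfolding strictly_pos_def by auto
  have irrL: "irreducible_mat L" using irr unfolding L_def .
  define M where "M = Max (range (\<lambda>i. p$i/\<theta>$i))"
  define m where "m = Min (range (\<lambda>i. p$i/\<theta>$i))"
  have mm: "m > 0" "m \<le> M" using minmax_props[OF th pp] unfolding M_def m_def by auto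
  have part1: "\<forall>\<mu>>0. \<forall>i. m * \<theta> $ i \<le> wstar L \<mu> p $ i \<and> wstar L \<mu> p $ i \<le> M * \<theta> $ i"
  proof (intro allI impI)
    fix \<mu> :: real and i assume mu: "\<mu> > 0"
    have wp: "\<forall>i. wstar L \<mu> p $ i > 0" and eq: "is_equilibrium L \<mu> p (wstar L \<mu> p)"
      using wstar_prop[OF offd ker th pp mu] by auto
    show "m * \<theta> $ i \<le> wstar L \<mu> p $ i \<and> wstar L \<mu> p $ i \<le> M * \<theta> $ i"
      using equil_upper[OF offd ker th _ eq wp] equil_lower[OF offd ker th _ eq wp] mu
      unfolding M_def m_def by simp
  qed
  show ?thesis
    using part1 mm lim0[OF offd ker th pp] limtop[OF offd col ker th pp irrL theta_sum]
    unfolding L_def by blast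
qed

end
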